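(* There is a numerical constant $C>0$ such that for all $\delta\in[0,1]$, $h\in(0,1/2]$ and $(u,w)\in\mathcal A_\delta$, \[ h^2\log\frac1h\le C\,E_h(u,w). \]
   Context: Let $B_1=\{x\in\mathbb R^2:|x|<1\}$. For scalar functions $u,w$ on $(0,1)$ define $U(x)=\frac12(u(|x|)-|x|)\frac{x}{|x|}$ and $W(x)=w(|x|)$. For $\delta\in[0,1]$ let $\mathcal A_\delta$ be the set of pairs $(u,w)$ with $(U,W)\in W^{1,2}(B_1;\mathbb R^2)\times W^{2,2}(B_1)$, $w(0)=0$, $w(1)=1-\delta$. For $h>0$, \[ E_h(u,w)=\int_0^1\frac{u^2}{r}+r(u'+w'^2-1)^2+h^2\Big(rw''^2+\frac{w'^2}{r}\Big)dr . \] *)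

theory Defs
  imports "HOL-Analysis.Analysis"
begin

fun Ck :: "nat \<Rightarrow> ('a::euclidean_space \<Rightarrow> real) \<Rightarrow> bool" where
  "Ck 0 f = continuous_on UNIV f"
| "Ck (Suc k) f = ((\<forall>x. f differentiable (at x)) \<and>
      (\<forall>b\<in>Basis. Ck k (\<lambda>x. frechet_derivative f (at x) b)))"

definition smooth_fun :: "('a::euclidean_space \<Rightarrow> real) \<Rightarrow> bool" where
  "smooth_fun f \<longleftrightarrow> (\<forall>k. Ck k f)"

definition test_fun :: "'a::euclidean_space set \<Rightarrow> ('a \<Rightarrow> real) \<Rightarrow> bool" where
  "test_fun S \<phi> \<longleftrightarrow> smooth_fun \<phi> \<and> compact (closure {x. \<phi> x \<noteq> 0})
      \<and> closure {x. \<phi> x \<noteq> 0} \<subseteq> S"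

definition loc_integrable_on :: "'a::euclidean_space set \<Rightarrow> ('a \<Rightarrow> real) \<Rightarrow> bool" where
  "loc_integrable_on S f \<longleftrightarrow>
     (\<forall>K. compact K \<and> K \<subseteq> S \<longrightarrow> integrable (lebesgue_on K) f)"

definition weak_deriv :: "'a::euclidean_space set \<Rightarrow> ('a \<Rightarrow> real) \<Rightarrow> 'a \<Rightarrow> ('a \<Rightarrow> real) \<Rightarrow> bool" where
  "weak_deriv S f b g \<longleftrightarrow> loc_integrable_on S f \<and> loc_integrable_on S g \<and>
     (\<forall>\<phi>. test_fun S \<phi> \<longrightarrow>
        (LINT x|lebesgue_on S. f x * frechet_derivative \<phi> (at x) b)
          = - (LINT x|lebesgue_on S. g x * \<phi> x))"

definition L2_on :: "'a::euclidean_space set \<Rightarrow> ('a \<Rightarrow> real) \<Rightarrow> bool" where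
  "L2_on S f \<longleftrightarrow> f \<in> borel_measurable (lebesgue_on S) \<and> integrable (lebesgue_on S) (\<lambda>x. (f x)\<^sup>2)"

definition W12 :: "'a::euclidean_space set \<Rightarrow> ('a \<Rightarrow> real) \<Rightarrow> bool" where
  "W12 S f \<longleftrightarrow> L2_on S f \<and> (\<forall>b\<in>Basis. \<exists>g. L2_on S g \<and> weak_deriv S f b g)"

definition W22 :: "'a::euclidean_space set \<Rightarrow> ('a \<Rightarrow> real) \<Rightarrow> bool" where
  "W22 S f \<longleftrightarrow> L2_on S f \<and> (\<forall>b\<in>Basis. \<exists>g. W12 S g \<and> weak_deriv S f b g)"

definition W12_vec :: "'a::euclidean_space set \<Rightarrow> ('a \<Rightarrow> 'b::euclidean_space) \<Rightarrow> bool" where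
  "W12_vec S F \<longleftrightarrow> (\<forall>c\<in>Basis. W12 S (\<lambda>x. F x \<bullet> c))"

definition B1 :: "(real^2) set" where "B1 = ball 0 1"

definition Ufield :: "(real \<Rightarrow> real) \<Rightarrow> real^2 \<Rightarrow> real^2" where
  "Ufield u x = ((u (norm x) - norm x) / (2 * norm x)) *\<^sub>R x"

definition Wfield :: "(real \<Rightarrow> real) \<Rightarrow> real^2 \<Rightarrow> real" where
  "Wfield w x = w (norm x)"

text \<open>Admissible set A_delta. The pointwise values w(0), w(1) refer to the continuous
  representative of w on [0,1] (W in W^{2,2}(B_1) embeds into C(closure B_1)).\<close>
definition admissible :: "real \<Rightarrow> (real \<Rightarrow> real) \<Rightarrow> (real \<Rightarrow> real) \<Rightarrow> bool" where
  "admissible \<delta> u w \<longleftrightarrow> W12_vec B1 (Ufield u) \<and> W22 B1 (Wfield w)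
     \<and> continuous_on {0..1} w \<and> w 0 = 0 \<and> w 1 = 1 - \<delta>"

text \<open>The energy E_h(u,w), with u', w', w'' given as (one-dimensional weak) derivatives
  u1, w1, w2 on (0,1); value in [0,\<infinity>].\<close>
definition energy :: "real \<Rightarrow> (real \<Rightarrow> real) \<Rightarrow> (real \<Rightarrow> real) \<Rightarrow> (real \<Rightarrow> real)
    \<Rightarrow> (real \<Rightarrow> real) \<Rightarrow> (real \<Rightarrow> real) \<Rightarrow> ennreal" where
  "energy h u w u1 w1 w2 = (\<integral>\<^sup>+ r. ennreal ((u r)\<^sup>2 / r + r * (u1 r + (w1 r)\<^sup>2 - 1)\<^sup>2
        + h\<^sup>2 * (r * (w2 r)\<^sup>2 + (w1 r)\<^sup>2 / r)) \<partial>(lebesgue_on {0<..<1}))"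

end

theory Submission
  imports Defs "HOL-Computational_Algebra.Polynomial"
begin


lemma Ck_Suc_real:
  "Ck (Suc k) (f::real\<Rightarrow>real) \<longleftrightarrow> (\<forall>x. f differentiable (at x)) \<and> Ck k (\<lambda>x. frechet_derivative f (at x) 1)"
  by (simp add: Basis_real_def)

lemma fd_real:
  assumes "(f has_real_derivative d) (at x)"
  shows "frechet_derivative f (at x) 1 = d"
proof -
  have "(f has_derivative (*) d) (at x)"
    using assms has_field_derivative_imp_has_derivative by blast
  then have "(*) d = frechet_derivative f (at x)" by (rule frechet_derivative_at)
  then show ?thesis by (metis mult.right_neutral)
qed

lemma CkI:
  assumes "\<And>x. (f has_real_derivative f' x) (at x)" "Ck k f'"
  shows "Ck (Suc k) f"
proof -
  have "(\<lambda>x. frechet_derivative f (at x) 1) = f'" using fd_real assms(1) by blast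
  moreover have "\<forall>x. f differentiable (at x)"
    using assms(1) real_differentiable_def by blast
  ultimately show ?thesis using assms(2) by (simp add: Ck_Suc_real)
qed

lemma CkD:
  assumes "Ck (Suc k) (f::real\<Rightarrow>real)"
  shows "\<exists>f'. (\<forall>x. (f has_real_derivative f' x) (at x)) \<and> Ck k f'"
proof -
  have d: "\<forall>x. f differentiable (at x)" and c: "Ck k (\<lambda>x. frechet_derivative f (at x) 1)"
    using assms by (auto simp: Ck_Suc_real)
  have "\<forall>x. (f has_real_derivative deriv f x) (at x)"
    using d DERIV_deriv_iff_real_differentiable by blast
  moreover then have "(\<lambda>x. frechet_derivative f (at x) 1) = deriv f"
    using fd_real by blast
  ultimately show ?thesis using c by metis
qed

lemma Ck_Suc_imp: "Ck (Suc k) (f::real\<Rightarrow>real) \<Longrightarrow> Ck k f"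
proof (induction k arbitrary: f)
  case 0
  then have "\<forall>x. f differentiable (at x)" by (simp add: Ck_Suc_real)
  then show ?case by (simp add: differentiable_imp_continuous_within continuous_at_imp_continuous_on)
next
  case (Suc k)
  from CkD[OF Suc.prems] obtain f' where f': "\<forall>x. (f has_real_derivative f' x) (at x)" "Ck (Suc k) f'" by blast
  show ?case by (rule CkI[OF _ Suc.IH]) (use f' in auto)
qed



lemma Ck_const: "Ck k (\<lambda>x::real. c::real)"
proof (induction k arbitrary: c)
  case 0 then show ?case by simp
next
  case (Suc k) show ?case by (rule CkI[of _ "\<lambda>x. 0"]) (auto intro: Suc)
qed

lemma Ck_id: "Ck k (\<lambda>x::real. x)"
proof (cases k)
  case 0 then show ?thesis by (simp add: continuous_on_id)
next
  case (Suc j) show ?thesis unfolding Suc by (rule CkI[of _ "\<lambda>x. 1"]) (auto intro: Ck_const)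
qed

lemma Ck_add: "Ck k f \<Longrightarrow> Ck k g \<Longrightarrow> Ck k (\<lambda>x::real. f x + g x)"
proof (induction k arbitrary: f g)
  case 0 then show ?case by (simp add: continuous_on_add)
next
  case (Suc k)
  obtain f' where f': "\<forall>x. (f has_real_derivative f' x) (at x)" "Ck k f'" using CkD[OF Suc.prems(1)] by blast
  obtain g' where g': "\<forall>x. (g has_real_derivative g' x) (at x)" "Ck k g'" using CkD[OF Suc.prems(2)] by blast
  show ?case by (rule CkI[of _ "\<lambda>x. f' x + g' x"]) (use f' g' Suc.IH in \<open>auto intro: DERIV_add\<close>)
qed



lemma Ck_mult: "Ck k f \<Longrightarrow> Ck k g \<Longrightarrow> Ck k (\<lambda>x::real. f x * g x)"
proof (induction k arbitrary: f g)
  case 0 then show ?case by (simp add: continuous_on_mult)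
next
  case (Suc k)
  obtain f' where f': "\<forall>x. (f has_real_derivative f' x) (at x)" "Ck k f'" using CkD[OF Suc.prems(1)] by blast
  obtain g' where g': "\<forall>x. (g has_real_derivative g' x) (at x)" "Ck k g'" using CkD[OF Suc.prems(2)] by blast
  have fk: "Ck k f" "Ck k g" using Suc.prems Ck_Suc_imp by blast+
  show ?case
  proof (rule CkI[of _ "\<lambda>x. f' x * g x + f x * g' x"])
    show "((\<lambda>x. f x * g x) has_real_derivative f' x * g x + f x * g' x) (at x)" for x
      using DERIV_mult[OF f'(1)[rule_format, of x] g'(1)[rule_format, of x]] by (simp add: mult.commute)
    show "Ck k (\<lambda>x. f' x * g x + f x * g' x)"
      using Ck_add Suc.IH f'(2) g'(2) fk by blast
  qed
qed



lemma Ck_comp: "Ck k f \<Longrightarrow> Ck k p \<Longrightarrow> Ck k (\<lambda>x::real. f (p x))"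
proof (induction k arbitrary: f p)
  case 0 then show ?case
    by simp (metis continuous_on_compose2 subset_UNIV)
next
  case (Suc k)
  obtain f' where f': "\<forall>x. (f has_real_derivative f' x) (at x)" "Ck k f'" using CkD[OF Suc.prems(1)] by blast
  obtain p' where p': "\<forall>x. (p has_real_derivative p' x) (at x)" "Ck k p'" using CkD[OF Suc.prems(2)] by blast
  have fk: "Ck k p" using Suc.prems Ck_Suc_imp by blast+
  show ?case
  proof (rule CkI[of _ "\<lambda>x. f' (p x) * p' x"])
    show "((\<lambda>x. f (p x)) has_real_derivative f' (p x) * p' x) (at x)" for x
      using f' p' DERIV_chain2 by blast
    show "Ck k (\<lambda>x. f' (p x) * p' x)"
      using Ck_mult Suc.IH f'(2) p'(2) fk by blast
  qed
qed



lemma Ck_inverse: "Ck k f \<Longrightarrow> (\<And>x. f x \<noteq> 0) \<Longrightarrow> Ck k (\<lambda>x::real. inverse (f x))"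
proof (induction k arbitrary: f)
  case 0 then show ?case by (simp add: continuous_on_inverse)
next
  case (Suc k)
  obtain f' where f': "\<forall>x. (f has_real_derivative f' x) (at x)" "Ck k f'" using CkD[OF Suc.prems(1)] by blast
  have fk: "Ck k f" using Suc.prems Ck_Suc_imp by blast+
  have ik: "Ck k (\<lambda>x. inverse (f x))" using Suc.IH fk Suc.prems(2) by blast
  show ?case
  proof (rule CkI[of _ "\<lambda>x. (-1) * f' x * (inverse (f x) * inverse (f x))"])
    show "((\<lambda>x. inverse (f x)) has_real_derivative (-1) * f' x * (inverse (f x) * inverse (f x))) (at x)" for x
      using DERIV_inverse_fun[OF f'(1)[rule_format, of x] Suc.prems(2)[of x]]
      by (simp add: power2_eq_square)
    show "Ck k (\<lambda>x. (-1) * f' x * (inverse (f x) * inverse (f x)))"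
      by (intro Ck_mult Ck_const f' ik)
  qed
qed




definition G :: "real poly \<Rightarrow> real \<Rightarrow> real" where
  "G P x = (if 0 < x then poly P (inverse x) * exp (- inverse x) else 0)"

lemma poly_exp_lim_aux: "((\<lambda>y. y ^ n * poly P y * exp (-y)) \<longlongrightarrow> (0::real)) at_top"
proof (induction P arbitrary: n rule: pCons_induct)
  case 0 then show ?case by simp
next
  case (pCons a p)
  have e: "(\<lambda>y. y ^ n * poly (pCons a p) y * exp (-y)) =
     (\<lambda>y. a * (y ^ n / exp y) + y ^ Suc n * poly p y * exp (-y))"
    by (auto simp: exp_minus field_simps)
  have "((\<lambda>y::real. y ^ n / exp y) \<longlongrightarrow> 0) at_top" by (rule tendsto_power_div_exp_0)
  then have "((\<lambda>y. a * (y ^ n / exp y) + y ^ Suc n * poly p y * exp (-y)) \<longlongrightarrow> a * 0 + 0) at_top"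
    by (intro tendsto_intros pCons.IH)
  then show ?case unfolding e by simp
qed

lemma poly_exp_lim: "((\<lambda>y. poly P y * exp (-y)) \<longlongrightarrow> (0::real)) at_top"
  using poly_exp_lim_aux[of 0 P] by simp

lemma poly_exp_lim0: "((\<lambda>x. poly P (inverse x) * exp (- inverse x)) \<longlongrightarrow> (0::real)) (at_right 0)"
  using filterlim_compose[OF poly_exp_lim filterlim_inverse_at_top_right] by (simp add: o_def)

definition Dp :: "real poly \<Rightarrow> real poly" where
  "Dp P = [:0,0,1:] * (P - pderiv P)"

lemma H_deriv:
  assumes "0 < x"
  shows "((\<lambda>x. poly P (inverse x) * exp (- inverse x)) has_real_derivative
          poly (Dp P) (inverse x) * exp (- inverse x)) (at x)"
proof -
  have "((\<lambda>x. poly P (inverse x) * exp (- inverse x)) has_real_derivative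
     poly (pderiv P) (inverse x) * (- inverse (x^2)) * exp (- inverse x) +
     poly P (inverse x) * (exp (- inverse x) * inverse (x^2))) (at x)"
    using assms
    apply (intro DERIV_mult' DERIV_chain2[OF poly_DERIV] derivative_eq_intros)
    apply (auto simp: power2_eq_square)
    done
  moreover have "poly (pderiv P) (inverse x) * (- inverse (x^2)) * exp (- inverse x) +
     poly P (inverse x) * (exp (- inverse x) * inverse (x^2)) = poly (Dp P) (inverse x) * exp (- inverse x)"
    by (simp add: Dp_def algebra_simps power2_eq_square field_simps)
  ultimately show ?thesis by simp
qed

lemma G_deriv: "(G P has_real_derivative G (Dp P) x) (at x)"
proof (cases "0 < x")
  case True
  have "((\<lambda>x. poly P (inverse x) * exp (- inverse x)) has_real_derivative G (Dp P) x) (at x)"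
    using H_deriv[OF True] True by (simp add: G_def)
  then show ?thesis
    by (rule has_field_derivative_transform_within_open[where S="{0<..}"]) (use True in \<open>auto simp: G_def\<close>)
next
  case False
  show ?thesis
  proof (cases "x < 0")
    case True
    have "((\<lambda>x. 0) has_real_derivative G (Dp P) x) (at x)"
      using True by (simp add: G_def)
    then show ?thesis
      by (rule has_field_derivative_transform_within_open[where S="{..<0}"]) (use True in \<open>auto simp: G_def\<close>)
  next
    case False
    with \<open>\<not> 0 < x\<close> have x0: "x = 0" by simp
    have "((\<lambda>y. (G P y - G P 0) / (y - 0)) \<longlongrightarrow> 0) (at 0)"
    proof (rule filterlim_split_at)
      have "eventually (\<lambda>y. 0 = (G P y - G P 0) / (y - 0)) (at_left (0::real))"
        by (auto simp: G_def eventually_at_left_field intro!: exI[of _ "-1"])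
      then show "((\<lambda>y. (G P y - G P 0) / (y - 0)) \<longlongrightarrow> 0) (at_left 0)"
        by (rule Lim_transform_eventually[OF tendsto_const])
      have "eventually (\<lambda>y. poly (pCons 0 P) (inverse y) * exp (- inverse y) = (G P y - G P 0) / (y - 0)) (at_right (0::real))"
        by (auto simp: G_def eventually_at_right_field divide_inverse mult_ac intro!: exI[of _ "1"])
      then show "((\<lambda>y. (G P y - G P 0) / (y - 0)) \<longlongrightarrow> 0) (at_right 0)"
        by (rule Lim_transform_eventually[OF poly_exp_lim0])
    qed
    then have "(G P has_real_derivative 0) (at 0)"
      by (simp add: has_field_derivative_iff)
    then show ?thesis using x0 by (simp add: G_def)
  qed
qed

lemma Ck_G: "Ck k (G P)"
proof (induction k arbitrary: P)
  case 0
  have "continuous_on UNIV (G P)"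
    using G_deriv DERIV_isCont continuous_at_imp_continuous_on by blast
  then show ?case by simp
next
  case (Suc k)
  show ?case by (rule CkI[OF G_deriv Suc.IH])
qed




lemma Ck_cminus: "Ck k (\<lambda>x::real. c - x)"
proof -
  have "Ck k (\<lambda>x::real. c + (-1) * x)" by (intro Ck_add Ck_mult Ck_const Ck_id)
  then show ?thesis by simp
qed

lemma Ck_affine: "Ck k (\<lambda>x::real. m * x + c)"
  by (intro Ck_add Ck_mult Ck_const Ck_id)

lemma G1: "G 1 x = (if 0 < x then exp (- inverse x) else 0)"
  by (simp add: G_def)

lemma G1_pos: "0 < x \<Longrightarrow> 0 < G 1 x" and G1_zero: "x \<le> 0 \<Longrightarrow> G 1 x = 0" and G1_nonneg: "0 \<le> G 1 x"
  by (auto simp: G1)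

definition S :: "real \<Rightarrow> real" where
  "S x = G 1 x * inverse (G 1 x + G 1 (1 - x))"

lemma S_den_pos: "0 < G 1 x + G 1 (1 - x)"
proof (cases "0 < x")
  case True then show ?thesis using G1_pos[of x] G1_nonneg[of "1-x"] by linarith
next
  case False then show ?thesis using G1_pos[of "1-x"] G1_nonneg[of x] by linarith
qed

lemma Ck_S: "Ck k S"
  unfolding S_def
  by (intro Ck_mult Ck_G Ck_inverse Ck_add Ck_comp[OF Ck_G Ck_cminus])
     (use S_den_pos in \<open>auto simp: less_le\<close>)

lemma S_zero: "x \<le> 0 \<Longrightarrow> S x = 0"
  by (simp add: S_def G1_zero)

lemma S_one: "1 \<le> x \<Longrightarrow> S x = 1"
  using G1_pos[of x] by (simp add: S_def G1_zero)

lemma S_bounds: "0 \<le> S x" "S x \<le> 1"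
  using S_den_pos[of x] G1_nonneg[of x] G1_nonneg[of "1-x"]
  by (auto simp: S_def field_simps)

definition Sd :: "real \<Rightarrow> real" where "Sd = deriv S"

lemma S_deriv: "(S has_real_derivative Sd x) (at x)"
proof -
  obtain f' where "\<forall>x. (S has_real_derivative f' x) (at x)" using CkD[OF Ck_S] by blast
  then show ?thesis unfolding Sd_def using DERIV_imp_deriv by metis
qed

lemma Sd_cont: "continuous_on UNIV Sd"
proof -
  obtain f' where f': "\<forall>x. (S has_real_derivative f' x) (at x)" "Ck 0 f'" using CkD[of 0 S] Ck_S by blast
  have "f' = Sd" unfolding Sd_def using f'(1) DERIV_imp_deriv by (metis ext)
  then show ?thesis using f'(2) by simp
qed

lemma Sd_zero: assumes "x < 0 \<or> 1 < x" shows "Sd x = 0"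
proof -
  from assms show ?thesis
  proof
    assume x: "x < 0"
    have "((\<lambda>x. 0) has_real_derivative 0) (at x)" by simp
    then have "(S has_real_derivative 0) (at x)"
      by (rule has_field_derivative_transform_within_open[where S="{..<0}"]) (use x in \<open>auto simp: S_zero\<close>)
    then show ?thesis using S_deriv DERIV_unique by blast
  next
    assume x: "1 < x"
    have "((\<lambda>x. 1) has_real_derivative 0) (at x)" by simp
    then have "(S has_real_derivative 0) (at x)"
      by (rule has_field_derivative_transform_within_open[where S="{1<..}"]) (use x in \<open>auto simp: S_one\<close>)
    then show ?thesis using S_deriv DERIV_unique by blast
  qed
qed

lemma Sd_bound: obtains B where "0 \<le> B" "\<And>x. \<bar>Sd x\<bar> \<le> B"
proof -
  have "compact (Sd ` {0..1})"
    by (rule compact_continuous_image) (use Sd_cont continuous_on_subset in auto)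
  then obtain B where B: "\<forall>y\<in>Sd ` {0..1}. norm y \<le> B"
    using compact_imp_bounded bounded_iff by blast
  have "\<bar>Sd x\<bar> \<le> B" for x
  proof (cases "x \<in> {0..1}")
    case True then show ?thesis using B by auto
  next
    case False then have "Sd x = 0" using Sd_zero by auto
    then show ?thesis using B[rule_format, of "Sd 0"] by auto
  qed
  moreover have "0 \<le> B" using B[rule_format, of "Sd 0"] by auto
  ultimately show ?thesis using that by blast
qed




definition q :: "real \<Rightarrow> real \<Rightarrow> real" where "q a r = r * inverse (r*r + a*a)"
definition qd :: "real \<Rightarrow> real \<Rightarrow> real" where "qd a r = (a*a - r*r) * inverse ((r*r + a*a) * (r*r + a*a))"

lemma q_deriv: assumes "0 < a" shows "(q a has_real_derivative qd a r) (at r)"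
proof -
  have pos: "r*r + a*a \<noteq> 0" using assms by (smt (verit) mult_pos_pos zero_le_square)
  have h1: "((\<lambda>r. r*r + a*a) has_real_derivative (r + r)) (at r)"
    using DERIV_add[OF DERIV_mult'[OF DERIV_ident DERIV_ident] DERIV_const[of "a*a"]] by simp
  have h2: "((\<lambda>r. inverse (r*r + a*a)) has_real_derivative - ((r + r) * inverse ((r*r + a*a) ^ Suc (Suc 0)))) (at r)"
    by (rule DERIV_inverse_fun[OF h1 pos])
  have h3: "(q a has_real_derivative r * (- ((r + r) * inverse ((r*r + a*a) ^ Suc (Suc 0)))) + 1 * inverse (r*r + a*a)) (at r)"
    unfolding q_def by (rule DERIV_mult'[OF DERIV_ident h2])
  moreover have "r * (- ((r + r) * inverse ((r*r + a*a) ^ Suc (Suc 0)))) + 1 * inverse (r*r + a*a) = qd a r"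
  proof -
    have pos2: "(r*r + a*a) * (r*r + a*a) \<noteq> 0" using pos by simp
    show ?thesis using pos pos2 unfolding qd_def
      by (simp add: power2_eq_square divide_simps)
  qed
  ultimately show ?thesis by simp
qed


definition theta :: "real \<Rightarrow> real \<Rightarrow> real" where "theta a r = S (r/a - 1) * S (3 - 4*r)"
definition thetad :: "real \<Rightarrow> real \<Rightarrow> real" where
  "thetad a r = Sd (r/a - 1) * (1/a) * S (3 - 4*r) + S (r/a - 1) * (Sd (3 - 4*r) * (-4))"
definition Phi :: "real \<Rightarrow> real \<Rightarrow> real" where "Phi a r = theta a r * q a r"
definition Phid :: "real \<Rightarrow> real \<Rightarrow> real" where "Phid a r = thetad a r * q a r + theta a r * qd a r"

lemma theta_deriv: "(theta a has_real_derivative thetad a r) (at r)"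
proof -
  have d1: "((\<lambda>r. r/a - 1) has_real_derivative 1/a) (at r)"
    using DERIV_diff[OF DERIV_cdivide[OF DERIV_ident, of a] DERIV_const[of 1]] by simp
  have d2: "((\<lambda>r. 3 - 4*r) has_real_derivative -4) (at r)"
    using DERIV_diff[OF DERIV_const[of 3] DERIV_cmult[OF DERIV_ident, of 4]] by simp
  have e1: "((\<lambda>r. S (r/a - 1)) has_real_derivative Sd (r/a - 1) * (1/a)) (at r)"
    by (rule DERIV_chain2[OF S_deriv d1])
  have e2: "((\<lambda>r. S (3 - 4*r)) has_real_derivative Sd (3 - 4*r) * (-4)) (at r)"
    by (rule DERIV_chain2[OF S_deriv d2])
  show ?thesis
    using DERIV_mult'[OF e1 e2] unfolding theta_def thetad_def by (simp add: algebra_simps)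
qed

lemma Phi_deriv: assumes "0 < a" shows "(Phi a has_real_derivative Phid a r) (at r)"
  using DERIV_mult'[OF theta_deriv q_deriv[OF assms]] unfolding Phi_def Phid_def
  by (simp add: algebra_simps)

lemma Phi_fd: assumes "0 < a" shows "frechet_derivative (Phi a) (at r) 1 = Phid a r"
  by (rule fd_real[OF Phi_deriv[OF assms]])



lemma Ck_Phi: assumes "0 < a" shows "Ck k (Phi a)"
proof -
  have f1: "(\<lambda>r. S (r/a - 1)) = (\<lambda>r. S ((1/a) * r + (-1)))" by (simp add: field_simps)
  have f2: "(\<lambda>r. S (3 - 4*r)) = (\<lambda>r. S ((-4) * r + 3))" by (simp add: field_simps)
  have t: "Ck k (theta a)" unfolding theta_def[abs_def]
    by (rule Ck_mult) (unfold f1 f2, (rule Ck_comp[OF Ck_S Ck_affine])+)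
  have den: "r*r + a*a \<noteq> 0" for r using assms by (smt (verit) mult_pos_pos zero_le_square)
  have qq: "Ck k (q a)" unfolding q_def[abs_def]
    by (intro Ck_mult Ck_id Ck_inverse Ck_add Ck_const den)
  show ?thesis unfolding Phi_def[abs_def] by (rule Ck_mult[OF t qq])
qed

lemma Phi_vanish:
  assumes "0 < a" "r < a \<or> 3/4 < r"
  shows "Phi a r = 0" "Phid a r = 0"
proof -
  from assms(2) have "(S (r/a - 1) = 0 \<and> Sd (r/a - 1) = 0) \<or> (S (3 - 4*r) = 0 \<and> Sd (3 - 4*r) = 0)"
  proof
    assume "r < a" then have "r/a - 1 < 0" using assms(1) by (simp add: field_simps)
    then show ?thesis using S_zero Sd_zero by auto
  next
    assume "3/4 < r" then have "3 - 4*r < 0" by simp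
    then show ?thesis using S_zero Sd_zero by auto
  qed
  then show "Phi a r = 0" "Phid a r = 0"
    by (auto simp: Phi_def Phid_def theta_def thetad_def)
qed

lemma test_Phi:
  assumes "0 < a"
  shows "test_fun {0<..<1} (Phi a)"
proof -
  have sub: "{x. Phi a x \<noteq> 0} \<subseteq> {a..3/4}"
    using Phi_vanish[OF assms] by (force simp: not_le)
  have cl: "closure {x. Phi a x \<noteq> 0} \<subseteq> {a..3/4}"
    by (rule closure_minimal[OF sub]) simp
  have "compact (closure {x. Phi a x \<noteq> 0})"
    by (rule compact_Int_closed[of "{a..3/4}" "closure {x. Phi a x \<noteq> 0}", simplified Int_absorb1[OF cl]]) auto
  moreover have "closure {x. Phi a x \<noteq> 0} \<subseteq> {0<..<1}" using cl assms by auto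
  moreover have "smooth_fun (Phi a)" unfolding smooth_fun_def using Ck_Phi[OF assms] by blast
  ultimately show ?thesis unfolding test_fun_def by blast
qed




lemma q_bounds: assumes "0 < a" "0 < r" shows "0 \<le> q a r" "q a r \<le> 1/r"
proof -
  have "0 < r*r + a*a" using assms by (simp add: add_pos_pos)
  then show "0 \<le> q a r" using assms by (simp add: q_def)
  have "r*r \<le> r*r + a*a" by simp
  then show "q a r \<le> 1/r" using assms \<open>0 < r*r + a*a\<close>
    by (simp add: q_def field_simps)
qed

lemma q_lower: assumes "0 < a" "a \<le> r" shows "1/(2*r) \<le> q a r"
proof -
  have r: "0 < r" using assms by simp
  have "a*a \<le> r*r" using assms by (simp add: mult_mono)
  then have "r*r + a*a \<le> 2*(r*r)" by simp
  moreover have "0 < r*r + a*a" using r by (simp add: add_pos_nonneg)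
  ultimately show ?thesis using r by (simp add: q_def field_simps)
qed

lemma qd_bound: assumes "0 < a" "0 < r" shows "\<bar>qd a r\<bar> \<le> 1/(r*r)"
proof -
  have p: "0 < r*r + a*a" using assms by (simp add: add_pos_pos)
  have "0 \<le> a*a" "0 \<le> r*r" by auto
  then have "\<bar>a*a - r*r\<bar> \<le> r*r + a*a" by (simp add: abs_le_iff)
  then have "\<bar>a*a - r*r\<bar> / ((r*r + a*a) * (r*r + a*a)) \<le> (r*r + a*a) / ((r*r + a*a) * (r*r + a*a))"
    using p by (intro divide_right_mono) auto
  also have "\<dots> = 1 / (r*r + a*a)" using p by simp
  also have "\<dots> \<le> 1/(r*r)" using p assms by (intro divide_left_mono) auto
  finally show ?thesis by (simp add: qd_def abs_mult divide_inverse)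
qed

lemma theta_bounds: "0 \<le> theta a r" "theta a r \<le> 1"
  using S_bounds[of "r/a - 1"] S_bounds[of "3 - 4*r"]
  by (auto simp: theta_def intro: mult_le_one)

lemma theta_one: assumes "0 < a" "2*a \<le> r" "r \<le> 1/2" shows "theta a r = 1"
proof -
  have "1 \<le> r/a - 1" using assms by (simp add: field_simps)
  moreover have "1 \<le> 3 - 4*r" using assms by simp
  ultimately show ?thesis by (simp add: theta_def S_one)
qed

lemma thetad_bound:
  assumes "0 < a" "0 < r" "r < 1" "\<And>x. \<bar>Sd x\<bar> \<le> B"
  shows "\<bar>thetad a r\<bar> \<le> 6*B/r"
proof -
  have B0: "0 \<le> B" using assms(4)[of 0] by simp
  have t1: "\<bar>Sd (r/a - 1) * (1/a) * S (3 - 4*r)\<bar> \<le> 2*B/r"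
  proof (cases "1 < r/a - 1")
    case True then have "Sd (r/a - 1) = 0" using Sd_zero by auto
    then show ?thesis using B0 assms(2) by simp
  next
    case False
    then have "r \<le> 2*a" using assms by (simp add: field_simps)
    then have ia: "1/a \<le> 2/r" using assms by (simp add: field_simps)
    have "\<bar>Sd (r/a - 1) * (1/a) * S (3 - 4*r)\<bar> = \<bar>Sd (r/a - 1)\<bar> * (1/a) * S (3 - 4*r)"
      using S_bounds assms by (simp add: abs_mult)
    also have "\<dots> \<le> B * (2/r) * 1"
      using assms(4) ia S_bounds B0 assms(1) assms(2)
      by (intro mult_mono) auto
    finally show ?thesis by (simp add: mult.commute)
  qed
  have t2: "\<bar>S (r/a - 1) * (Sd (3 - 4*r) * (-4))\<bar> \<le> 4*B/r"
  proof -
    have "\<bar>S (r/a - 1) * (Sd (3 - 4*r) * (-4))\<bar> = S (r/a - 1) * (4 * \<bar>Sd (3 - 4*r)\<bar>)"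
      using S_bounds by (simp add: abs_mult)
    also have "\<dots> \<le> 1 * (4 * B)"
      using S_bounds assms(4) B0 by (intro mult_mono) auto
    also have "\<dots> \<le> 4*B/r" using assms B0 mult_left_le_one_le[of B r] by (simp add: field_simps mult.commute)
    finally show ?thesis .
  qed
  have "\<bar>thetad a r\<bar> \<le> 2*B/r + 4*B/r"
    unfolding thetad_def using t1 t2 by linarith
  then show ?thesis by simp
qed

lemma Phi_bounds:
  assumes "0 < a" "0 < r"
  shows "0 \<le> Phi a r" "Phi a r \<le> 1/r"
proof -
  show "0 \<le> Phi a r" using q_bounds[OF assms] theta_bounds[of a r] by (simp add: Phi_def)
  have "theta a r * q a r \<le> q a r" using q_bounds[OF assms] theta_bounds[of a r]
    by (intro mult_left_le_one_le) auto
  then show "Phi a r \<le> 1/r" using q_bounds[OF assms] by (simp add: Phi_def)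
qed

lemma Phi_lower:
  assumes "0 < a" "2*a \<le> r" "r \<le> 1/2"
  shows "1/(2*r) \<le> Phi a r"
  using theta_one[OF assms] q_lower[of a r] assms by (simp add: Phi_def)

lemma Phid_bound:
  assumes "0 < a" "0 < r" "r < 1" "\<And>x. \<bar>Sd x\<bar> \<le> B"
  shows "\<bar>Phid a r\<bar> \<le> (6*B + 1)/(r*r)"
proof -
  have "\<bar>Phid a r\<bar> \<le> \<bar>thetad a r * q a r\<bar> + \<bar>theta a r * qd a r\<bar>"
    unfolding Phid_def by (rule abs_triangle_ineq)
  also have "\<dots> = \<bar>thetad a r\<bar> * q a r + theta a r * \<bar>qd a r\<bar>"
    using q_bounds[OF assms(1,2)] theta_bounds[of a r] by (simp add: abs_mult)
  also have "\<dots> \<le> (6*B/r) * (1/r) + 1 * (1/(r*r))"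
    using thetad_bound[OF assms] q_bounds[OF assms(1,2)] theta_bounds[of a r] qd_bound[OF assms(1,2)]
    by (intro add_mono mult_mono) auto
  also have "\<dots> = (6*B + 1)/(r*r)" by (simp add: add_divide_distrib)
  finally show ?thesis .
qed




lemma amgm1: fixes l r P g :: real assumes "0 < l" "0 < r" shows "- (P * g) \<le> l * r * g^2 / 2 + P^2 / (2 * l * r)"
proof -
  have "0 \<le> (l * r * g + P)^2 / (2 * l * r)" using assms by simp
  also have "(l * r * g + P)^2 / (2 * l * r) = l * r * g^2 / 2 + P * g + P^2 / (2 * l * r)"
    using assms by (simp add: power2_eq_square field_simps)
  finally show ?thesis by simp
qed

lemma amgm2: fixes l r U D :: real assumes "0 < l" "0 < r" shows "- (U * D) \<le> l * U^2 / (2 * r) + r * D^2 / (2 * l)"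
proof -
  have "0 \<le> (l * U + r * D)^2 / (2 * l * r)" using assms by simp
  also have "(l * U + r * D)^2 / (2 * l * r) = l * U^2 / (2 * r) + U * D + r * D^2 / (2 * l)"
    using assms by (simp add: power2_eq_square field_simps)
  finally show ?thesis by simp
qed

lemma pointwise:
  fixes r P D U U1 W1 h \<beta> C1 :: real
  assumes r: "0 < r" and P: "0 \<le> P" "P \<le> 1/r" and D: "\<bar>D\<bar> \<le> C1/(r*r)"
    and h: "0 < h" and b: "0 < \<beta>"
  shows "P - U1 * P - U * D \<le> ((1 + \<beta>/2)/h^2) * (U^2/r + r * (U1 + W1^2 - 1)^2 + h^2 * (W1^2/r))
            + ((1 + C1^2) * h^2 / (2*\<beta>)) * (1/r^3)"
proof -
  define l where "l = \<beta>/h^2"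
  have l: "0 < l" using h b by (simp add: l_def)
  define g where "g = U1 + W1^2 - 1"
  have e: "P - U1 * P - U * D = P * W1^2 + (- (P * g)) + (- (U * D))"
    by (simp add: g_def algebra_simps)
  have t1: "P * W1^2 \<le> W1^2 / r"
    using mult_right_mono[OF P(2), of "W1^2"] by simp
  have t2: "- (P * g) \<le> l * r * g^2 / 2 + P^2 / (2 * l * r)" by (rule amgm1[OF l r])
  have t3: "- (U * D) \<le> l * U^2 / (2 * r) + r * D^2 / (2 * l)" by (rule amgm2[OF l r])
  have P2: "P^2 \<le> 1/r^2" using P power_mono[OF P(2) P(1)] by (simp add: power_divide)
  have D2: "D^2 \<le> C1^2/(r^2*r^2)"
  proof -
    have "D^2 = \<bar>D\<bar>^2" by simp
    also have "\<dots> \<le> (C1/(r*r))^2" by (rule power_mono[OF D]) simp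
    finally show ?thesis by (simp add: power_divide power2_eq_square)
  qed
  have t4: "P^2 / (2 * l * r) \<le> (1/r^2) / (2 * l * r)"
    using P2 l r by (intro divide_right_mono) auto
  have t5: "r * D^2 / (2 * l) \<le> r * (C1^2/(r^2*r^2)) / (2 * l)"
    using D2 l r by (intro divide_right_mono mult_left_mono) auto
  have t6: "(1/r^2) / (2 * l * r) + r * (C1^2/(r^2*r^2)) / (2 * l) = ((1 + C1^2) * h^2 / (2*\<beta>)) * (1/r^3)"
  proof -
    have "(1/r^2) / (2 * l * r) = (h^2 / (2*\<beta>)) * (1/r^3)"
      using r h b by (simp add: l_def power3_eq_cube power2_eq_square)
    moreover have "r * (C1^2/(r^2*r^2)) / (2 * l) = (C1^2 * h^2 / (2*\<beta>)) * (1/r^3)"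
      using r h b by (simp add: l_def power3_eq_cube power2_eq_square)
    ultimately show ?thesis by (simp add: algebra_simps add_divide_distrib)
  qed
  have t7: "W1^2 / r + (l * r * g^2 / 2 + l * U^2 / (2 * r))
      \<le> ((1 + \<beta>/2)/h^2) * (U^2/r + r * g^2 + h^2 * (W1^2/r))"
  proof -
    have a1: "0 \<le> U^2/r" "0 \<le> r * g^2" "0 \<le> W1^2/r" "0 \<le> h^2 * (W1^2/r)" using r by auto
    have "W1^2 / r + (l * r * g^2 / 2 + l * U^2 / (2 * r))
       = (1/h^2) * (h^2 * (W1^2/r)) + (\<beta>/2/h^2) * (U^2/r + r * g^2)"
      using h by (simp add: l_def field_simps)
    also have "\<dots> \<le> ((1 + \<beta>/2)/h^2) * (h^2 * (W1^2/r)) + ((1 + \<beta>/2)/h^2) * (U^2/r + r * g^2)"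
      using a1 h b by (intro add_mono mult_right_mono divide_right_mono) auto
    also have "\<dots> = ((1 + \<beta>/2)/h^2) * (U^2/r + r * g^2 + h^2 * (W1^2/r))"
      by (simp add: algebra_simps)
    finally show ?thesis .
  qed
  have fin: "P * W1^2 + (- (P * g)) + (- (U * D)) \<le> ((1 + \<beta>/2)/h^2) * (U^2/r + r * g^2 + h^2 * (W1^2/r))
            + ((1 + C1^2) * h^2 / (2*\<beta>)) * (1/r^3)"
    using t1 t2 t3 t4 t5 t6 t7 by linarith
  then show ?thesis unfolding e g_def .
qed




lemma enn_int_le:
  fixes f :: "'a \<Rightarrow> real"
  assumes "integrable M f"
  shows "ennreal (integral\<^sup>L M f) \<le> (\<integral>\<^sup>+ x. ennreal (f x) \<partial>M)"
proof -
  have i: "integrable M (\<lambda>x. max (f x) 0)" using assms by auto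
  have "integral\<^sup>L M f \<le> integral\<^sup>L M (\<lambda>x. max (f x) 0)"
    using assms i by (intro integral_mono) auto
  then have "ennreal (integral\<^sup>L M f) \<le> ennreal (integral\<^sup>L M (\<lambda>x. max (f x) 0))"
    by (rule ennreal_leI)
  also have "\<dots> = (\<integral>\<^sup>+ x. ennreal (max (f x) 0) \<partial>M)"
    using nn_integral_eq_integral[OF i] by simp
  also have "\<dots> = (\<integral>\<^sup>+ x. ennreal (f x) \<partial>M)"
    by (rule nn_integral_cong) (auto simp: max_def ennreal_neg)
  finally show ?thesis .
qed

lemma int_log:
  assumes "0 < h" "h \<le> 1/2"
  shows "integral\<^sup>L (lebesgue_on {h/2..1/2}) (\<lambda>x::real. 1/(2*x)) = ln (1/h) / 2"
proof -
  have cont: "continuous_on {h/2..1/2} (\<lambda>x::real. 1/(2*x))"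
    using assms by (intro continuous_intros) auto
  have "((\<lambda>x::real. 1/(2*x)) has_integral (ln (1/2) / 2 - ln (h/2) / 2)) {h/2..1/2}"
  proof (rule fundamental_theorem_of_calculus)
    show "h/2 \<le> 1/2" using assms by simp
    fix x assume x: "x \<in> {h/2..1/2}"
    then have "0 < x" using assms by auto
    then have "((\<lambda>x. ln x / 2) has_real_derivative 1/(2*x)) (at x)"
      by (auto intro!: derivative_eq_intros)
    then show "((\<lambda>x. ln x / 2) has_vector_derivative 1/(2*x)) (at x within {h/2..1/2})"
      by (simp add: has_real_derivative_iff_has_vector_derivative has_vector_derivative_at_within)
  qed
  moreover have "ln (1/2) / 2 - ln (h/2) / 2 = ln (1/h) / 2"
    using assms by (simp add: ln_div field_simps)
  ultimately have "integral {h/2..1/2} (\<lambda>x::real. 1/(2*x)) = ln (1/h) / 2"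
    by (simp add: integral_unique)
  moreover have "integral\<^sup>L (lebesgue_on {h/2..1/2}) (\<lambda>x::real. 1/(2*x)) = integral {h/2..1/2} (\<lambda>x::real. 1/(2*x))"
    by (rule lebesgue_integral_eq_integral[OF continuous_imp_integrable_real[OF cont]]) simp
  ultimately show ?thesis by simp
qed

lemma int_cube:
  assumes "0 < a" "a \<le> 3/4"
  shows "integral\<^sup>L (lebesgue_on {a..3/4}) (\<lambda>x::real. 1/x^3) \<le> 1/(2*a^2)"
    "integrable (lebesgue_on {a..3/4}) (\<lambda>x::real. 1/x^3)"
proof -
  have cont: "continuous_on {a..3/4} (\<lambda>x::real. 1/x^3)"
    using assms by (intro continuous_intros) auto
  show ii: "integrable (lebesgue_on {a..3/4}) (\<lambda>x::real. 1/x^3)"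
    by (rule continuous_imp_integrable_real[OF cont])
  have "((\<lambda>x::real. 1/x^3) has_integral ((- 1/(2*(3/4)^2)) - (- 1/(2*a^2)))) {a..3/4}"
  proof (rule fundamental_theorem_of_calculus)
    show "a \<le> 3/4" using assms by simp
    fix x assume x: "x \<in> {a..3/4}"
    then have x0: "0 < x" using assms by auto
    have "((\<lambda>x. - 1/(2*x^2)) has_real_derivative 1/x^3) (at x)"
      using x0 by (auto intro!: derivative_eq_intros simp: power2_eq_square power3_eq_cube field_simps)
    then show "((\<lambda>x. - 1/(2*x^2)) has_vector_derivative 1/x^3) (at x within {a..3/4})"
      by (simp add: has_real_derivative_iff_has_vector_derivative has_vector_derivative_at_within)
  qed
  then have "integral {a..3/4} (\<lambda>x::real. 1/x^3) = (- 1/(2*(3/4)^2)) - (- 1/(2*a^2))"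
    by (simp add: integral_unique)
  moreover have "integral\<^sup>L (lebesgue_on {a..3/4}) (\<lambda>x::real. 1/x^3) = integral {a..3/4} (\<lambda>x::real. 1/x^3)"
    by (rule lebesgue_integral_eq_integral[OF ii]) simp
  ultimately show "integral\<^sup>L (lebesgue_on {a..3/4}) (\<lambda>x::real. 1/x^3) \<le> 1/(2*a^2)" by simp
qed

lemma Phid_cont: assumes "0 < a" shows "continuous_on UNIV (Phid a)"
proof -
  obtain f' where f': "\<forall>x. (Phi a has_real_derivative f' x) (at x)" "Ck 0 f'"
    using CkD[of 0 "Phi a"] Ck_Phi[OF assms] by blast
  have "f' = Phid a" using f'(1) Phi_deriv[OF assms] DERIV_unique by (metis ext)
  then show ?thesis using f'(2) by simp
qed

lemma Phi_cont: assumes "0 < a" shows "continuous_on UNIV (Phi a)"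
  using Ck_Phi[OF assms, of 0] by simp




lemma core:
  fixes h B :: real
  assumes h: "0 < h" "h \<le> 1/2"
    and wu: "weak_deriv {0<..<1} u 1 u1" and ww: "weak_deriv {0<..<1} w 1 w1"
    and B: "\<And>x. \<bar>Sd x\<bar> \<le> B" "0 \<le> B"
  shows "ennreal (h\<^sup>2 * ln (1/h)) \<le> ennreal (4 + 64*(1 + (6*B+1)^2)) * energy h u w u1 w1 w2"
proof -
  define a where "a = h/4"
  have a: "0 < a" "a \<le> 1/8" "2*a = h/2" using h by (auto simp: a_def)
  define K where "K = {a..3/4::real}"
  define C1 where "C1 = 6*B + 1"
  define \<beta> where "\<beta> = 32*(1 + C1^2)"
  have b: "0 < \<beta>" by (simp add: \<beta>_def add_pos_nonneg)
  have KS: "K \<subseteq> {0<..<1}" using a by (auto simp: K_def)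
  have Kc: "compact K" by (simp add: K_def)
  have Kl: "K \<in> sets lebesgue" by (simp add: K_def)
  have Sl: "{0<..<1::real} \<in> sets lebesgue" by simp
  have inK: "\<And>x. x \<in> K \<Longrightarrow> 0 < x \<and> x < 1 \<and> a \<le> x" using a by (auto simp: K_def)
  have iu: "integrable (lebesgue_on K) u" and iu1: "integrable (lebesgue_on K) u1"
    using wu KS Kc unfolding weak_deriv_def loc_integrable_on_def by auto
  have iw1: "integrable (lebesgue_on K) w1"
    using ww KS Kc unfolding weak_deriv_def loc_integrable_on_def by auto
  have eq0: "(LINT x|lebesgue_on {0<..<1}. u x * Phid a x) = - (LINT x|lebesgue_on {0<..<1}. u1 x * Phi a x)"
    using wu test_Phi[OF a(1)] Phi_fd[OF a(1)] unfolding weak_deriv_def by auto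
  have van: "\<And>x. x \<notin> K \<Longrightarrow> Phi a x = 0 \<and> Phid a x = 0"
    using Phi_vanish[OF a(1)] by (auto simp: K_def not_le)
  have r1: "(LINT x|lebesgue_on {0<..<1}. u x * Phid a x) = (LINT x|lebesgue_on K. u x * Phid a x)"
  proof -
    have "(\<lambda>x. u x * Phid a x) = (\<lambda>x. if x \<in> K then u x * Phid a x else 0)" using van by auto
    then show ?thesis using integral_restrict[OF KS Kl Sl, of "\<lambda>x. u x * Phid a x"] by simp
  qed
  have r2: "(LINT x|lebesgue_on {0<..<1}. u1 x * Phi a x) = (LINT x|lebesgue_on K. u1 x * Phi a x)"
  proof -
    have "(\<lambda>x. u1 x * Phi a x) = (\<lambda>x. if x \<in> K then u1 x * Phi a x else 0)" using van by auto
    then show ?thesis using integral_restrict[OF KS Kl Sl, of "\<lambda>x. u1 x * Phi a x"] by simp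
  qed
  have eqK: "(LINT x|lebesgue_on K. u x * Phid a x) + (LINT x|lebesgue_on K. u1 x * Phi a x) = 0"
    using eq0 r1 r2 by simp
  have mPhi: "Phi a \<in> borel_measurable (lebesgue_on K)"
    by (rule continuous_imp_measurable_on_sets_lebesgue[OF continuous_on_subset[OF Phi_cont[OF a(1)]] Kl]) simp
  have mPhid: "Phid a \<in> borel_measurable (lebesgue_on K)"
    by (rule continuous_imp_measurable_on_sets_lebesgue[OF continuous_on_subset[OF Phid_cont[OF a(1)]] Kl]) simp
  have iPhi: "integrable (lebesgue_on K) (Phi a)"
    unfolding K_def by (rule continuous_imp_integrable_real[OF continuous_on_subset[OF Phi_cont[OF a(1)]]]) simp
  have mu: "u \<in> borel_measurable (lebesgue_on K)" using iu by (rule borel_measurable_integrable)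
  have mu1: "u1 \<in> borel_measurable (lebesgue_on K)" using iu1 by (rule borel_measurable_integrable)
  have mw1: "w1 \<in> borel_measurable (lebesgue_on K)" using iw1 by (rule borel_measurable_integrable)
  have iuPhid: "integrable (lebesgue_on K) (\<lambda>x. u x * Phid a x)"
  proof (rule Bochner_Integration.integrable_bound)
    show "integrable (lebesgue_on K) (\<lambda>x. (C1/(a*a)) * u x)" using iu by simp
    show "(\<lambda>x. u x * Phid a x) \<in> borel_measurable (lebesgue_on K)" using mu mPhid by measurable
    show "AE x in lebesgue_on K. norm (u x * Phid a x) \<le> norm ((C1/(a*a)) * u x)"
    proof (rule AE_I2)
      fix x assume "x \<in> space (lebesgue_on K)"
      then have x: "x \<in> K" by simp
      have "\<bar>Phid a x\<bar> \<le> C1/(x*x)" using Phid_bound[OF a(1) _ _ B(1)] inK[OF x] by (simp add: C1_def)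
      also have "\<dots> \<le> C1/(a*a)" using inK[OF x] a B(2) unfolding C1_def
        by (intro divide_left_mono mult_mono) auto
      finally have "\<bar>Phid a x\<bar> \<le> C1/(a*a)" .
      then have "\<bar>u x\<bar> * \<bar>Phid a x\<bar> \<le> \<bar>u x\<bar> * (C1/(a*a))" by (rule mult_left_mono) simp
      moreover have "0 \<le> C1/(a*a)" using B(2) by (simp add: C1_def)
      moreover have "0 \<le> C1" using B(2) by (simp add: C1_def)
      ultimately show "norm (u x * Phid a x) \<le> norm ((C1/(a*a)) * u x)"
        by (simp add: abs_mult mult.commute)
    qed
  qed
  have iu1Phi: "integrable (lebesgue_on K) (\<lambda>x. u1 x * Phi a x)"
  proof (rule Bochner_Integration.integrable_bound)
    show "integrable (lebesgue_on K) (\<lambda>x. (1/a) * u1 x)" using iu1 by simp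
    show "(\<lambda>x. u1 x * Phi a x) \<in> borel_measurable (lebesgue_on K)" using mu1 mPhi by measurable
    show "AE x in lebesgue_on K. norm (u1 x * Phi a x) \<le> norm ((1/a) * u1 x)"
    proof (rule AE_I2)
      fix x assume "x \<in> space (lebesgue_on K)"
      then have x: "x \<in> K" by simp
      have p0: "0 \<le> Phi a x" using Phi_bounds[OF a(1)] inK[OF x] by auto
      have "Phi a x \<le> 1/x" using Phi_bounds[OF a(1)] inK[OF x] by auto
      also have "1/x \<le> 1/a" using inK[OF x] a by (intro divide_left_mono) auto
      finally have "Phi a x \<le> 1/a" .
      then have "\<bar>u1 x\<bar> * Phi a x \<le> \<bar>u1 x\<bar> * (1/a)" by (rule mult_left_mono) simp
      then show "norm (u1 x * Phi a x) \<le> norm ((1/a) * u1 x)"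
        using p0 a by (simp add: abs_mult mult.commute)
    qed
  qed
  define Psi where "Psi x = Phi a x - u1 x * Phi a x - u x * Phid a x" for x
  have iPsi: "integrable (lebesgue_on K) Psi"
    unfolding Psi_def using iPhi iu1Phi iuPhid by auto
  have intPsi: "(LINT x|lebesgue_on K. Psi x) = (LINT x|lebesgue_on K. Phi a x)"
    unfolding Psi_def using iPhi iu1Phi iuPhid eqK by simp
  have low: "ln (1/h) / 2 \<le> (LINT x|lebesgue_on K. Phi a x)"
  proof -
    have "(LINT x|lebesgue_on {h/2..1/2}. 1/(2*x)) \<le> (LINT x|lebesgue_on K. Phi a x)"
    proof (rule integral_mono_lebesgue_on_AE[OF iPhi])
      show "AE x in lebesgue_on {h/2..1/2}. 1/(2*x) \<le> Phi a x"
        by (rule AE_I2) (use Phi_lower[OF a(1)] a in auto)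
      show "AE x in lebesgue_on K. 0 \<le> Phi a x"
        by (rule AE_I2) (use Phi_bounds[OF a(1)] inK in auto)
      show "{h/2..1/2} \<subseteq> K" using a h by (auto simp: K_def)
    qed (auto simp: Kl)
    then show ?thesis using int_log[OF h] by simp
  qed
  define c1 where "c1 = (1 + \<beta>/2)/h^2"
  define c2 where "c2 = (1 + C1^2) * h^2 / (2*\<beta>)"
  have c: "0 \<le> c1" "0 \<le> c2" using h b by (auto simp: c1_def c2_def)
  define F0 where "F0 x = (u x)^2/x + x * (u1 x + (w1 x)^2 - 1)^2 + h^2 * ((w1 x)^2/x)" for x
  have pw: "Psi x \<le> c1 * F0 x + c2 * (1/x^3)" if x: "x \<in> K" for x
  proof -
    have "\<bar>Phid a x\<bar> \<le> C1/(x*x)" using Phid_bound[OF a(1) _ _ B(1)] inK[OF x] by (simp add: C1_def)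
    then show ?thesis unfolding Psi_def F0_def c1_def c2_def
      using pointwise[of x "Phi a x" "Phid a x" C1 h \<beta> "u1 x" "u x" "w1 x"] Phi_bounds[OF a(1)] inK[OF x] h b
      by auto
  qed
  have mid: "(\<lambda>x::real. x) \<in> borel_measurable (lebesgue_on K)"
    by (rule continuous_imp_measurable_on_sets_lebesgue[OF continuous_on_id Kl])
  have mF0: "F0 \<in> borel_measurable (lebesgue_on K)" unfolding F0_def[abs_def] using mu mu1 mw1 mid by measurable
  have m3: "(\<lambda>x::real. 1/x^3) \<in> borel_measurable (lebesgue_on K)" using mid by measurable
  have "ennreal (LINT x|lebesgue_on K. Psi x) \<le> (\<integral>\<^sup>+ x. ennreal (Psi x) \<partial>lebesgue_on K)"
    by (rule enn_int_le[OF iPsi])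
  also have "\<dots> \<le> (\<integral>\<^sup>+ x. ennreal c1 * ennreal (F0 x) + ennreal c2 * ennreal (1/x^3) \<partial>lebesgue_on K)"
  proof (rule nn_integral_mono)
    fix x assume "x \<in> space (lebesgue_on K)"
    then have x: "x \<in> K" by simp
    have f0: "0 \<le> F0 x" using inK[OF x] by (simp add: F0_def)
    have "ennreal (Psi x) \<le> ennreal (c1 * F0 x + c2 * (1/x^3))" by (rule ennreal_leI[OF pw[OF x]])
    also have "\<dots> = ennreal c1 * ennreal (F0 x) + ennreal c2 * ennreal (1/x^3)"
    proof -
      have x0: "0 \<le> 1/x^3" using inK[OF x] by simp
      have e1: "ennreal (c1 * F0 x) = ennreal c1 * ennreal (F0 x)" by (rule ennreal_mult[OF c(1) f0])
      have e2: "ennreal (c2 * (1/x^3)) = ennreal c2 * ennreal (1/x^3)" by (rule ennreal_mult[OF c(2) x0])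
      have e0: "ennreal (c1 * F0 x + c2 * (1/x^3)) = ennreal (c1 * F0 x) + ennreal (c2 * (1/x^3))"
        by (rule ennreal_plus) (use c f0 x0 in auto)
      show ?thesis by (simp only: e0 e1 e2)
    qed
    finally show "ennreal (Psi x) \<le> ennreal c1 * ennreal (F0 x) + ennreal c2 * ennreal (1/x^3)" .
  qed
  also have "\<dots> = ennreal c1 * (\<integral>\<^sup>+ x. ennreal (F0 x) \<partial>lebesgue_on K) + ennreal c2 * (\<integral>\<^sup>+ x. ennreal (1/x^3) \<partial>lebesgue_on K)"
    using mF0 m3 by (simp add: nn_integral_add nn_integral_cmult)
  finally have up: "ennreal (LINT x|lebesgue_on K. Psi x) \<le> ennreal c1 * (\<integral>\<^sup>+ x. ennreal (F0 x) \<partial>lebesgue_on K) + ennreal c2 * (\<integral>\<^sup>+ x. ennreal (1/x^3) \<partial>lebesgue_on K)" .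
  have eF: "(\<integral>\<^sup>+ x. ennreal (F0 x) \<partial>lebesgue_on K) \<le> energy h u w u1 w1 w2"
  proof -
    have "(\<integral>\<^sup>+ x. ennreal (F0 x) \<partial>lebesgue_on K) = (\<integral>\<^sup>+ x. ennreal (F0 x) * indicator K x \<partial>lebesgue)"
      by (rule nn_integral_restrict_space) (simp add: Kl)
    also have "\<dots> \<le> (\<integral>\<^sup>+ x. ennreal ((u x)\<^sup>2 / x + x * (u1 x + (w1 x)\<^sup>2 - 1)\<^sup>2
        + h\<^sup>2 * (x * (w2 x)\<^sup>2 + (w1 x)\<^sup>2 / x)) * indicator {0<..<1} x \<partial>lebesgue)"
    proof (rule nn_integral_mono)
      fix x :: real
      show "ennreal (F0 x) * indicator K x \<le> ennreal ((u x)\<^sup>2 / x + x * (u1 x + (w1 x)\<^sup>2 - 1)\<^sup>2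
        + h\<^sup>2 * (x * (w2 x)\<^sup>2 + (w1 x)\<^sup>2 / x)) * indicator {0<..<1} x"
      proof (cases "x \<in> K")
        case True
        then have x0: "0 < x" "x \<in> {0<..<1}" using inK KS by auto
        have "h\<^sup>2 * ((w1 x)\<^sup>2 / x) \<le> h\<^sup>2 * (x * (w2 x)\<^sup>2 + (w1 x)\<^sup>2 / x)"
          using x0 by (intro mult_left_mono) auto
        then have "F0 x \<le> (u x)\<^sup>2 / x + x * (u1 x + (w1 x)\<^sup>2 - 1)\<^sup>2 + h\<^sup>2 * (x * (w2 x)\<^sup>2 + (w1 x)\<^sup>2 / x)"
          by (simp add: F0_def)
        then have "ennreal (F0 x) \<le> ennreal ((u x)\<^sup>2 / x + x * (u1 x + (w1 x)\<^sup>2 - 1)\<^sup>2 + h\<^sup>2 * (x * (w2 x)\<^sup>2 + (w1 x)\<^sup>2 / x))"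
          by (rule ennreal_leI)
        then show ?thesis using True x0 by (simp del: ennreal_plus)
      qed simp
    qed
    also have "\<dots> = energy h u w u1 w1 w2"
      unfolding energy_def by (rule nn_integral_restrict_space[symmetric]) simp
    finally show ?thesis .
  qed
  have e3: "(\<integral>\<^sup>+ x. ennreal (1/x^3) \<partial>lebesgue_on K) \<le> ennreal (1/(2*a^2))"
  proof -
    have "(\<integral>\<^sup>+ x. ennreal (1/x^3) \<partial>lebesgue_on K) = ennreal (LINT x|lebesgue_on K. 1/x^3)"
      unfolding K_def by (rule nn_integral_eq_integral[OF int_cube(2)[OF a(1)]]) (use a in \<open>auto intro!: AE_I2\<close>)
    also have "\<dots> \<le> ennreal (1/(2*a^2))"
      unfolding K_def by (rule ennreal_leI[OF int_cube(1)]) (use a in auto)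
    finally show ?thesis .
  qed
  have c2a: "c2 * (1/(2*a^2)) = 1/8"
  proof -
    have n: "1 + C1^2 \<noteq> 0" by (smt (verit) zero_le_power2)
    have "c2 = h^2/64" unfolding c2_def \<beta>_def using n by (simp add: field_simps)
    then show ?thesis using h unfolding a_def by (simp add: field_simps power2_eq_square)
  qed
  have "ennreal (ln (1/h) / 2) \<le> ennreal c1 * energy h u w u1 w1 w2 + ennreal c2 * ennreal (1/(2*a^2))"
  proof -
    have "ennreal (ln (1/h) / 2) \<le> ennreal (LINT x|lebesgue_on K. Psi x)"
      using low intPsi by (simp add: ennreal_leI)
    also have "\<dots> \<le> ennreal c1 * energy h u w u1 w1 w2 + ennreal c2 * ennreal (1/(2*a^2))"
      using up eF e3 by (meson add_mono mult_left_mono order_trans zero_le)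
    finally show ?thesis .
  qed
  also have "ennreal c2 * ennreal (1/(2*a^2)) = ennreal (1/8)"
  proof -
    have "ennreal c2 * ennreal (1/(2*a^2)) = ennreal (c2 * (1/(2*a^2)))"
      by (rule ennreal_mult[symmetric]) (use c a in auto)
    then show ?thesis by (simp only: c2a)
  qed
  finally have m1: "ennreal (ln (1/h) / 2) \<le> ennreal c1 * energy h u w u1 w1 w2 + ennreal (1/8)" .
  have lnh: "1/2 \<le> ln (1/h)"
  proof -
    have "ln 2 \<le> ln (1/h)" using h by (simp add: field_simps)
    then show ?thesis using ln2_ge_two_thirds by linarith
  qed
  have "ennreal (ln (1/h) / 4) + ennreal (1/8) \<le> ennreal (ln (1/h) / 2)"
    using lnh by (simp add: ennreal_plus[symmetric] del: ennreal_plus)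
  then have "ennreal (ln (1/h) / 4) + ennreal (1/8) \<le> ennreal c1 * energy h u w u1 w1 w2 + ennreal (1/8)"
    using m1 by (rule order_trans)
  then have m2: "ennreal (ln (1/h) / 4) \<le> ennreal c1 * energy h u w u1 w1 w2"
    by (simp add: ennreal_add_left_cancel_le add.commute[of _ "ennreal (1/8)"])
  have "ennreal (h\<^sup>2 * ln (1/h)) = ennreal (4*h^2) * ennreal (ln (1/h) / 4)"
    using lnh by (simp add: ennreal_mult[symmetric])
  also have "\<dots> \<le> ennreal (4*h^2) * (ennreal c1 * energy h u w u1 w1 w2)"
    by (rule mult_left_mono[OF m2]) simp
  also have "\<dots> = ennreal (4*h^2*c1) * energy h u w u1 w1 w2"
    using c by (simp add: ennreal_mult mult.assoc)
  also have "4*h^2*c1 = 4 + 64*(1 + (6*B+1)^2)"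
    using h unfolding c1_def \<beta>_def C1_def by (simp add: field_simps)
  finally show ?thesis .
qed



theorem lemma3p8:
  "\<exists>C>0. \<forall>\<delta> h u w u1 w1 w2.
     0 \<le> \<delta> \<and> \<delta> \<le> 1 \<and> 0 < h \<and> h \<le> 1/2 \<and> admissible \<delta> u w
     \<and> weak_deriv {0<..<1} u 1 u1 \<and> weak_deriv {0<..<1} w 1 w1
     \<and> weak_deriv {0<..<1} w1 1 w2
     \<longrightarrow> ennreal (h\<^sup>2 * ln (1/h)) \<le> ennreal C * energy h u w u1 w1 w2"
proof -
  obtain B where B: "0 \<le> B" "\<And>x. \<bar>Sd x\<bar> \<le> B" using Sd_bound by blast
  have pos: "0 < 4 + 64*(1 + (6*B+1)^2)" by (simp add: add_pos_nonneg)
  show ?thesis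
    by (rule exI[of _ "4 + 64*(1 + (6*B+1)^2)"]) (use pos core B in blast)
qed

end
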